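(* Let $G$ be a graph of order $n\geq 2$. Then $q_{2}(G)=n-2$ if and only if the complement $\overline{G}$ has a balanced bipartite component or has at least two bipartite components.
   Context: All graphs are finite and simple. For a graph $G$ with adjacency matrix $A$ and diagonal degree matrix $D$, the signless Laplacian is $Q(G)=A+D$; its eigenvalues are denoted $q_1(G)\geq q_2(G)\geq\cdots\geq q_n(G)$. $\overline{G}$ denotes the complement of $G$. A connected bipartite graph is called balanced if its two vertex classes have equal size, and unbalanced otherwise; an isolated vertex is considered to be an (unbalanced) bipartite component with one empty vertex class. A bipartite component of a graph means a connected component that is bipartite (including isolated vertices). *)

theory Defs
  imports "Jordan_Normal_Form.Char_Poly" "HOL-Computational_Algebra.Polynomial" "HOL-Library.Multiset"
begin

text \<open>A finite simple graph of order n: vertex set {0..<n}, adjacency given by a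
  symmetric irreflexive relation E (only its values on {0..<n} matter).\<close>

definition simple_graph :: "nat \<Rightarrow> (nat \<Rightarrow> nat \<Rightarrow> bool) \<Rightarrow> bool" where
  "simple_graph n E \<longleftrightarrow> (\<forall>i<n. \<forall>j<n. E i j \<longleftrightarrow> E j i) \<and> (\<forall>i<n. \<not> E i i)"

definition complement :: "nat \<Rightarrow> (nat \<Rightarrow> nat \<Rightarrow> bool) \<Rightarrow> nat \<Rightarrow> nat \<Rightarrow> bool" where
  "complement n E i j \<longleftrightarrow> i < n \<and> j < n \<and> i \<noteq> j \<and> \<not> E i j"

definition degree :: "nat \<Rightarrow> (nat \<Rightarrow> nat \<Rightarrow> bool) \<Rightarrow> nat \<Rightarrow> nat" where
  "degree n E i = card {j. j < n \<and> E i j}"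

definition signless_laplacian :: "nat \<Rightarrow> (nat \<Rightarrow> nat \<Rightarrow> bool) \<Rightarrow> real mat" where
  "signless_laplacian n E = mat n n (\<lambda>(i,j). (if i = j then real (degree n E i) else 0)
                                          + (if E i j then 1 else 0))"

text \<open>Eigenvalues of Q listed in non-increasing order with multiplicity
  (roots of the characteristic polynomial); q k G is the k-th one (1-based).\<close>
definition q_eig :: "nat \<Rightarrow> nat \<Rightarrow> (nat \<Rightarrow> nat \<Rightarrow> bool) \<Rightarrow> real" where
  "q_eig k n E = rev (sorted_list_of_multiset (proots (char_poly (signless_laplacian n E)))) ! (k - 1)"

definition adj_in :: "nat \<Rightarrow> (nat \<Rightarrow> nat \<Rightarrow> bool) \<Rightarrow> nat \<Rightarrow> nat \<Rightarrow> bool" where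
  "adj_in n E u v \<longleftrightarrow> u < n \<and> v < n \<and> E u v"

definition components :: "nat \<Rightarrow> (nat \<Rightarrow> nat \<Rightarrow> bool) \<Rightarrow> nat set set" where
  "components n E = {{u. u < n \<and> (adj_in n E)\<^sup>*\<^sup>* v u} | v. v < n}"

text \<open>The subgraph induced on C (a component) is bipartite with classes A, B
  (B may be empty, e.g. for an isolated vertex).\<close>
definition bipartition :: "(nat \<Rightarrow> nat \<Rightarrow> bool) \<Rightarrow> nat set \<Rightarrow> nat set \<Rightarrow> nat set \<Rightarrow> bool" where
  "bipartition E C A B \<longleftrightarrow> A \<inter> B = {} \<and> A \<union> B = C \<and>
     (\<forall>u\<in>C. \<forall>v\<in>C. E u v \<longrightarrow> (u \<in> A \<longleftrightarrow> v \<in> B))"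

definition bipartite_comp :: "(nat \<Rightarrow> nat \<Rightarrow> bool) \<Rightarrow> nat set \<Rightarrow> bool" where
  "bipartite_comp E C \<longleftrightarrow> (\<exists>A B. bipartition E C A B)"

definition balanced_comp :: "(nat \<Rightarrow> nat \<Rightarrow> bool) \<Rightarrow> nat set \<Rightarrow> bool" where
  "balanced_comp E C \<longleftrightarrow> (\<exists>A B. bipartition E C A B \<and> card A = card B)"

end

theory Submission
  imports Defs "Jordan_Normal_Form.Spectral_Radius" "Jordan_Normal_Form.Schur_Decomposition"
begin

lemma real_sym_eigenvalue:
  fixes A :: "real mat"
  assumes A: "A \<in> carrier_mat n n" and sym: "\<And>i j. i < n \<Longrightarrow> j < n \<Longrightarrow> A $$ (i,j) = A $$ (j,i)"
    and n: "n > 0"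
  shows "\<exists>e. eigenvalue A e"
proof -
  define Ac where "Ac = map_mat complex_of_real A"
  have Ac: "Ac \<in> carrier_mat n n" using A unfolding Ac_def by auto
  from spectrum_non_empty[OF Ac n] obtain a where "eigenvalue Ac a" unfolding spectrum_def by auto
  then obtain v where ev: "eigenvector Ac v a" unfolding eigenvalue_def by auto
  hence v: "v \<in> carrier_vec n" "v \<noteq> 0\<^sub>v n" "Ac *\<^sub>v v = a \<cdot>\<^sub>v v"
    using Ac unfolding eigenvector_def by auto
  define s where "s = (\<Sum>i<n. \<Sum>j<n. cnj (v $ i) * Ac $$ (i,j) * v $ j)"
  define t where "t = (\<Sum>i<n. cnj (v $ i) * v $ i)"
  have "s = (\<Sum>i<n. cnj (v $ i) * (Ac *\<^sub>v v) $ i)"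
    unfolding s_def using Ac v(1)
    by (auto simp: scalar_prod_def sum_distrib_left mult.assoc atLeast0LessThan intro!: sum.cong)
  also have "\<dots> = a * t" unfolding v(3) t_def using v(1)
    by (auto simp: sum_distrib_left intro!: sum.cong)
  finally have st: "s = a * t" .
  have "cnj s = (\<Sum>i<n. \<Sum>j<n. v $ i * Ac $$ (i,j) * cnj (v $ j))"
    unfolding s_def using Ac A by (auto simp: Ac_def intro!: sum.cong)
  also have "\<dots> = (\<Sum>j<n. \<Sum>i<n. v $ i * Ac $$ (i,j) * cnj (v $ j))" by (rule sum.swap)
  also have "\<dots> = s" unfolding s_def using A sym
    by (auto simp: Ac_def intro!: sum.cong)
  finally have cs: "cnj s = s" .
  have tr: "t = of_real (\<Sum>i<n. (cmod (v $ i))^2)" unfolding t_def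
    by (simp add: complex_norm_square[symmetric] mult.commute del: of_real_power)
  obtain k where k: "k < n" "v $ k \<noteq> 0" using v(1,2) by (metis eq_vecI carrier_vecD index_zero_vec)
  have "(\<Sum>i<n. (cmod (v $ i))^2) > 0"
    by (rule sum_pos2[of _ k]) (use k in auto)
  hence t0: "t \<noteq> 0" unfolding tr by (simp only: of_real_eq_0_iff)
  have "cnj a * cnj t = a * t" using cs st by simp
  moreover have "cnj t = t" using tr by simp
  ultimately have "cnj a = a" using t0 by simp
  hence "a = of_real (Re a)" by (metis Reals_cnj_iff complex_is_Real_iff of_real_Re)
  with `eigenvalue Ac a` have "eigenvalue Ac (of_real (Re a))" by simp
  hence "poly (char_poly Ac) (of_real (Re a)) = 0" using eigenvalue_root_char_poly[OF Ac] by auto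
  also have "char_poly Ac = map_poly of_real (char_poly A)" unfolding Ac_def
    by (rule of_real_hom.char_poly_hom[OF A])
  finally have "poly (char_poly A) (Re a) = 0" by simp
  thus ?thesis using eigenvalue_root_char_poly[OF A] by auto
qed

lemma conj_real_vec[simp]: "conjugate (w :: real vec) = w"
  by (rule eq_vecI) auto

definition diagm :: "real list \<Rightarrow> real mat" where
  "diagm es = mat (length es) (length es) (\<lambda>(i,j). if i = j then es!i else 0)"

lemma diagm_carrier[simp]: "diagm es \<in> carrier_mat (length es) (length es)"
  unfolding diagm_def by auto

lemma unit_eigvec:
  fixes A :: "real mat"
  assumes A: "A \<in> carrier_mat n n" and sym: "\<And>i j. i < n \<Longrightarrow> j < n \<Longrightarrow> A $$ (i,j) = A $$ (j,i)"
    and n: "n > 0"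
  shows "\<exists>e u. u \<in> carrier_vec n \<and> u \<bullet> u = 1 \<and> A *\<^sub>v u = e \<cdot>\<^sub>v u"
proof -
  obtain e where "eigenvalue A e" using real_sym_eigenvalue[OF A sym n] by auto
  then obtain v where "eigenvector A v e" unfolding eigenvalue_def by auto
  hence v: "v \<in> carrier_vec n" "v \<noteq> 0\<^sub>v n" "A *\<^sub>v v = e \<cdot>\<^sub>v v"
    using A unfolding eigenvector_def by auto
  have vv: "v \<bullet> v > 0" using v conjugate_square_greater_0_vec[of v] by simp
  define u where "u = (1 / sqrt (v \<bullet> v)) \<cdot>\<^sub>v v"
  have u: "u \<in> carrier_vec n" using v unfolding u_def by auto
  have "u \<bullet> u = (1 / sqrt (v \<bullet> v)) * ((1 / sqrt (v \<bullet> v)) * (v \<bullet> v))"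
    unfolding u_def using v by (simp add: scalar_prod_smult_distrib smult_scalar_prod_distrib)
  also have "\<dots> = 1" using vv by (simp add: field_simps)
  finally have uu: "u \<bullet> u = 1" .
  have "A *\<^sub>v u = e \<cdot>\<^sub>v u" unfolding u_def using v A
    by (simp add: mult_mat_vec smult_smult_assoc mult.commute)
  with u uu show ?thesis by blast
qed

lemma orthonormal_completion:
  fixes u :: "real vec"
  assumes u: "u \<in> carrier_vec n" and uu: "u \<bullet> u = 1"
  shows "\<exists>W \<in> carrier_mat n n. transpose_mat W * W = 1\<^sub>m n \<and> col W 0 = u"
proof -
  interpret cof_vec_space n "TYPE(real)" .
  have u0: "u \<noteq> 0\<^sub>v n" using uu u by auto
  have n: "n > 0" using u u0 by (metis carrier_vecD eq_vecI gr0I index_zero_vec(2) less_nat_zero_code)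
  define b where "b = basis_completion u"
  define ws where "ws = gram_schmidt n b"
  from basis_completion[OF u u0, folded b_def]
  have dist_b: "distinct b" and indep: "\<not> lin_dep (set b)" and b: "set b \<subseteq> carrier_vec n"
    and hdb: "hd b = u" and len_b: "length b = n" by auto
  from hdb len_b n obtain vs where bv: "b = u # vs" by (cases b, auto)
  from gram_schmidt_result[OF b dist_b indep refl, folded ws_def]
  have ws: "set ws \<subseteq> carrier_vec n" "corthogonal ws" "length ws = n" by (auto simp: len_b)
  from gram_schmidt_hd[OF u, of vs, folded bv] have hdws: "hd ws = u" unfolding ws_def .
  have wsc: "\<And>i. i < n \<Longrightarrow> ws ! i \<in> carrier_vec n" using ws by auto
  have orth: "\<And>i j. i < n \<Longrightarrow> j < n \<Longrightarrow> ws ! i \<bullet> ws ! j = 0 \<longleftrightarrow> i \<noteq> j"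
    using corthogonalD[OF ws(2)] ws(3) by simp
  have pos: "\<And>i. i < n \<Longrightarrow> ws ! i \<bullet> ws ! i > 0"
    using orth wsc by (metis conj_real_vec conjugate_square_ge_0_vec order_le_less)
  define us where "us = map (\<lambda>w. (1 / sqrt (w \<bullet> w)) \<cdot>\<^sub>v w) ws"
  have lus: "length us = n" using ws unfolding us_def by auto
  have usi: "\<And>i. i < n \<Longrightarrow> us ! i = (1 / sqrt (ws!i \<bullet> ws!i)) \<cdot>\<^sub>v ws!i"
    unfolding us_def using ws by auto
  have usc: "\<And>i. i < n \<Longrightarrow> us ! i \<in> carrier_vec n" using usi wsc by auto
  have on: "\<And>i j. i < n \<Longrightarrow> j < n \<Longrightarrow> us ! i \<bullet> us ! j = (if i = j then 1 else 0)"
  proof -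
    fix i j assume i: "i < n" and j: "j < n"
    have "us ! i \<bullet> us ! j = (1 / sqrt (ws!i \<bullet> ws!i)) * ((1 / sqrt (ws!j \<bullet> ws!j)) * (ws!i \<bullet> ws!j))"
      unfolding usi[OF i] usi[OF j] using wsc[OF i] wsc[OF j]
      by (simp add: scalar_prod_smult_distrib smult_scalar_prod_distrib)
    also have "\<dots> = (if i = j then 1 else 0)"
      using orth[OF i j] pos[OF i] by (auto simp: field_simps)
    finally show "us ! i \<bullet> us ! j = (if i = j then 1 else 0)" .
  qed
  have us0: "us ! 0 = u" using usi[OF n] hdws ws(3) n uu
    by (metis hd_conv_nth length_greater_0_conv one_smult_vec real_sqrt_one div_by_1)
  define W where "W = mat_of_cols n us"
  have W: "W \<in> carrier_mat n n" unfolding W_def using lus by auto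
  have colW: "\<And>i. i < n \<Longrightarrow> col W i = us ! i" unfolding W_def using lus usc
    by (simp add: col_mat_of_cols)
  have "transpose_mat W * W = 1\<^sub>m n"
    by (rule eq_matI, insert W colW on, auto)
  moreover have "col W 0 = u" using colW[OF n] us0 by simp
  ultimately show ?thesis using W by blast
qed

lemma spectral:
  fixes A :: "real mat"
  assumes "A \<in> carrier_mat n n" and "\<And>i j. i < n \<Longrightarrow> j < n \<Longrightarrow> A $$ (i,j) = A $$ (j,i)"
  shows "\<exists>U es. U \<in> carrier_mat n n \<and> transpose_mat U * U = 1\<^sub>m n \<and> U * transpose_mat U = 1\<^sub>m n
     \<and> length es = n \<and> A = U * diagm es * transpose_mat U"
  using assms
proof (induction n arbitrary: A)
  case 0
  thus ?case
    by (intro exI[of _ "1\<^sub>m 0"] exI[of _ "[]"]) (auto intro!: eq_matI simp: diagm_def)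
next
  case (Suc m A)
  define n where "n = Suc m"
  have A: "A \<in> carrier_mat n n" using Suc n_def by auto
  have sym: "\<And>i j. i < n \<Longrightarrow> j < n \<Longrightarrow> A $$ (i,j) = A $$ (j,i)" using Suc n_def by auto
  obtain e u where u: "u \<in> carrier_vec n" "u \<bullet> u = 1" "A *\<^sub>v u = e \<cdot>\<^sub>v u"
    using unit_eigvec[OF A sym] n_def by auto
  obtain W where W: "W \<in> carrier_mat n n" "transpose_mat W * W = 1\<^sub>m n" "col W 0 = u"
    using orthonormal_completion[OF u(1,2)] by auto
  have WWt: "W * transpose_mat W = 1\<^sub>m n"
    using mat_mult_left_right_inverse[OF _ W(1) W(2)] W(1) by auto
  define A' where "A' = transpose_mat W * A * W"
  have A': "A' \<in> carrier_mat n n" using A W unfolding A'_def by auto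
  have A'ij: "\<And>i j. i < n \<Longrightarrow> j < n \<Longrightarrow> A' $$ (i,j) = col W i \<bullet> (A *\<^sub>v col W j)"
    unfolding A'_def using A W
    by (simp add: assoc_mult_mat[of _ n n _ n _ n] index_mult_mat mult_mat_vec_def)
  have Wo: "\<And>i j. i < n \<Longrightarrow> j < n \<Longrightarrow> col W i \<bullet> col W j = (if i = j then 1 else 0)"
  proof -
    fix i j assume "i < n" "j < n"
    hence "(transpose_mat W * W) $$ (i,j) = col W i \<bullet> col W j" using W(1) by simp
    hence "col W i \<bullet> col W j = (1\<^sub>m n) $$ (i,j)" unfolding W(2) by simp
    thus "col W i \<bullet> col W j = (if i = j then 1 else 0)" using \<open>i < n\<close> \<open>j < n\<close> by simp
  qed
  have symA': "\<And>i j. i < n \<Longrightarrow> j < n \<Longrightarrow> A' $$ (i,j) = A' $$ (j,i)"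
  proof -
    have "transpose_mat A' = A'"
    proof -
      have tA: "transpose_mat A = A" by (rule eq_matI, insert A sym, auto)
      have "transpose_mat A' = transpose_mat W * transpose_mat (transpose_mat W * A)"
        unfolding A'_def using A W by (subst transpose_mult[of _ n n _ n]) auto
      also have "\<dots> = transpose_mat W * (transpose_mat A * W)"
        using A W by (subst transpose_mult[of _ n n _ n]) auto
      also have "\<dots> = A'" unfolding tA A'_def using A W by auto
      finally show ?thesis .
    qed
    thus "\<And>i j. i < n \<Longrightarrow> j < n \<Longrightarrow> A' $$ (i,j) = A' $$ (j,i)"
      by (metis A' carrier_matD index_transpose_mat(1))
  qed
  have col0: "\<And>i. i < n \<Longrightarrow> A' $$ (i,0) = (if i = 0 then e else 0)"
  proof -
    fix i assume i: "i < n"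
    have "A' $$ (i,0) = col W i \<bullet> (e \<cdot>\<^sub>v col W 0)" using A'ij[OF i] n_def W(3) u(3) by auto
    also have "\<dots> = e * (col W i \<bullet> col W 0)" using W i u(1) by (metis col_dim scalar_prod_smult_distrib carrier_matD(1))
    also have "\<dots> = (if i = 0 then e else 0)" using Wo[OF i] n_def by auto
    finally show "A' $$ (i,0) = (if i = 0 then e else 0)" .
  qed
  have row0: "\<And>j. j < n \<Longrightarrow> A' $$ (0,j) = (if j = 0 then e else 0)"
    using symA' col0 n_def by (metis zero_less_Suc)
  define A3 where "A3 = mat m m (\<lambda>(i,j). A' $$ (Suc i, Suc j))"
  have A3: "A3 \<in> carrier_mat m m" unfolding A3_def by auto
  have symA3: "\<And>i j. i < m \<Longrightarrow> j < m \<Longrightarrow> A3 $$ (i,j) = A3 $$ (j,i)"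
    unfolding A3_def using symA' n_def by auto
  obtain U3 es3 where IH: "U3 \<in> carrier_mat m m" "transpose_mat U3 * U3 = 1\<^sub>m m"
     "U3 * transpose_mat U3 = 1\<^sub>m m" "length es3 = m" "A3 = U3 * diagm es3 * transpose_mat U3"
    using Suc.IH[OF A3 symA3] by blast
  define E1 where "E1 = mat 1 1 (\<lambda>_. e)"
  have E1: "E1 \<in> carrier_mat 1 1" unfolding E1_def by auto
  have A'blk: "A' = four_block_mat E1 (0\<^sub>m 1 m) (0\<^sub>m m 1) A3"
  proof (rule eq_matI)
    fix i j assume "i < dim_row (four_block_mat E1 (0\<^sub>m 1 m) (0\<^sub>m m 1) A3)"
      "j < dim_col (four_block_mat E1 (0\<^sub>m 1 m) (0\<^sub>m m 1) A3)"
    hence i: "i < n" and j: "j < n" using E1 A3 n_def by auto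
    show "A' $$ (i, j) = four_block_mat E1 (0\<^sub>m 1 m) (0\<^sub>m m 1) A3 $$ (i, j)"
      using i j col0 row0 E1 A3 n_def by (auto simp: E1_def A3_def)
  qed (insert A' E1 A3 n_def, auto)
  define D3 where "D3 = diagm es3"
  have D3: "D3 \<in> carrier_mat m m" unfolding D3_def using IH(4) diagm_carrier by metis
  have Dblk: "diagm (e # es3) = four_block_mat E1 (0\<^sub>m 1 m) (0\<^sub>m m 1) D3"
    unfolding D3_def E1_def by (rule eq_matI, insert IH(4), auto simp: diagm_def nth_Cons')
  define F where "F = four_block_mat (1\<^sub>m 1) (0\<^sub>m 1 m) (0\<^sub>m m 1) U3"
  have F: "F \<in> carrier_mat n n" unfolding F_def using IH(1) n_def by auto
  have Ft: "transpose_mat F = four_block_mat (1\<^sub>m 1) (0\<^sub>m 1 m) (0\<^sub>m m 1) (transpose_mat U3)"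
    unfolding F_def using IH(1) by (subst transpose_four_block_mat) auto
  have FtF: "transpose_mat F * F = 1\<^sub>m n"
    unfolding Ft unfolding F_def using IH(1,2) n_def
    by (subst mult_four_block_mat) auto
  have FFt: "F * transpose_mat F = 1\<^sub>m n"
    unfolding Ft unfolding F_def using IH(1,3) n_def
    by (subst mult_four_block_mat) auto
  have FDF: "F * diagm (e # es3) * transpose_mat F = A'"
    unfolding Ft Dblk A'blk unfolding F_def IH(5) D3_def[symmetric] using IH(1) D3 E1
    apply (subst mult_four_block_mat, auto)
    apply (subst mult_four_block_mat, auto)
    done
  define U where "U = W * F"
  have U: "U \<in> carrier_mat n n" unfolding U_def using W F by auto
  have tU: "transpose_mat U = transpose_mat F * transpose_mat W"
    unfolding U_def using W F by (simp add: transpose_mult[of _ n n _ n])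
  have tWc: "transpose_mat W \<in> carrier_mat n n" using W by auto
  have tFc: "transpose_mat F \<in> carrier_mat n n" using F by auto
  have DC: "diagm (e # es3) \<in> carrier_mat n n" using diagm_carrier[of "e#es3"] IH(4) n_def by simp
  have a1: "transpose_mat W * (W * F) = F"
    using assoc_mult_mat[OF tWc W(1) F, symmetric] W(2) F by simp
  have "transpose_mat U * U = transpose_mat F * (transpose_mat W * (W * F))"
    unfolding tU unfolding U_def by (rule assoc_mult_mat[OF tFc tWc mult_carrier_mat[OF W(1) F]])
  also have "\<dots> = 1\<^sub>m n" unfolding a1 by (rule FtF)
  finally have UtU: "transpose_mat U * U = 1\<^sub>m n" .
  have a2: "F * (transpose_mat F * transpose_mat W) = transpose_mat W"
    using assoc_mult_mat[OF F tFc tWc, symmetric] FFt tWc by simp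
  have "U * transpose_mat U = W * (F * (transpose_mat F * transpose_mat W))"
    unfolding tU unfolding U_def by (rule assoc_mult_mat[OF W(1) F mult_carrier_mat[OF tFc tWc]])
  also have "\<dots> = 1\<^sub>m n" unfolding a2 by (rule WWt)
  finally have UUt: "U * transpose_mat U = 1\<^sub>m n" .
  have a3: "F * (diagm (e # es3) * (transpose_mat F * transpose_mat W)) = A' * transpose_mat W"
  proof -
    have "(F * diagm (e # es3) * transpose_mat F) * transpose_mat W = F * diagm (e # es3) * (transpose_mat F * transpose_mat W)"
      by (rule assoc_mult_mat[OF mult_carrier_mat[OF F DC] tFc tWc])
    also have "\<dots> = F * (diagm (e # es3) * (transpose_mat F * transpose_mat W))"
      by (rule assoc_mult_mat[OF F DC mult_carrier_mat[OF tFc tWc]])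
    finally have "F * (diagm (e # es3) * (transpose_mat F * transpose_mat W)) = (F * diagm (e # es3) * transpose_mat F) * transpose_mat W" by simp
    thus ?thesis unfolding FDF .
  qed
  have a4: "W * (A' * transpose_mat W) = A"
  proof -
    have "A' * transpose_mat W = (transpose_mat W * A) * (W * transpose_mat W)"
      unfolding A'_def by (rule assoc_mult_mat[OF mult_carrier_mat[OF tWc A] W(1) tWc])
    also have "\<dots> = transpose_mat W * A" unfolding WWt using tWc A by simp
    finally have "W * (A' * transpose_mat W) = W * (transpose_mat W * A)" by simp
    also have "\<dots> = (W * transpose_mat W) * A" by (rule assoc_mult_mat[OF W(1) tWc A, symmetric])
    finally show ?thesis unfolding WWt using A by simp
  qed
  have "U * diagm (e # es3) * transpose_mat U = W * (F * (diagm (e # es3) * (transpose_mat F * transpose_mat W)))"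
    unfolding tU unfolding U_def
    by (simp only: assoc_mult_mat[OF mult_carrier_mat[OF W(1) F] DC mult_carrier_mat[OF tFc tWc]]
       assoc_mult_mat[OF W(1) F mult_carrier_mat[OF DC mult_carrier_mat[OF tFc tWc]]])
  also have "\<dots> = A" unfolding a3 a4 ..
  finally have "A = U * diagm (e # es3) * transpose_mat U" by simp
  thus ?case using U UtU UUt IH(4) n_def by (intro exI[of _ U] exI[of _ "e # es3"]) auto
qed

lemma char_poly_spectral:
  fixes L :: "real mat"
  assumes U: "U \<in> carrier_mat n n" "transpose_mat U * U = 1\<^sub>m n" "U * transpose_mat U = 1\<^sub>m n"
    and es: "length es = n" and L: "L = U * diagm es * transpose_mat U"
  shows "proots (char_poly L) = mset es"
proof -
  have D: "diagm es \<in> carrier_mat n n" using es by auto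
  have "similar_mat_wit L (diagm es) U (transpose_mat U)"
    unfolding similar_mat_wit_def Let_def using U D L by auto
  hence "char_poly L = char_poly (diagm es)"
    by (intro char_poly_similar) (auto simp: similar_mat_def)
  also have "\<dots> = (\<Prod>a\<leftarrow>diag_mat (diagm es). [:- a, 1:])"
    by (rule char_poly_upper_triangular[OF D]) (auto simp: upper_triangular_def diagm_def)
  also have "diag_mat (diagm es) = es"
    by (rule nth_equalityI) (auto simp: diag_mat_def diagm_def)
  finally have cp: "char_poly L = (\<Prod>a\<leftarrow>es. [:- a, 1:])" .
  have "proots (\<Prod>a\<leftarrow>es. [:- a, 1:]) = mset es"
  proof (induction es)
    case Nil thus ?case by simp
  next
    case (Cons a es)
    have "(\<Prod>a\<leftarrow>es. [:- a, 1:]) \<noteq> 0" by (auto simp: prod_list_zero_iff)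
    moreover have "[:- a, 1:] \<noteq> 0" by simp
    ultimately have "proots ([:- a, 1:] * (\<Prod>a\<leftarrow>es. [:- a, 1:])) = proots [:- a, 1:] + mset es"
      using Cons proots_mult by metis
    thus ?case by simp
  qed
  thus ?thesis using cp by simp
qed

lemma quad_spectral:
  fixes L :: "real mat"
  assumes U: "U \<in> carrier_mat n n" "transpose_mat U * U = 1\<^sub>m n" "U * transpose_mat U = 1\<^sub>m n"
    and es: "length es = n" and L: "L = U * diagm es * transpose_mat U"
    and x: "x \<in> carrier_vec n"
  shows "x \<bullet> (L *\<^sub>v x) = (\<Sum>i<n. es!i * ((transpose_mat U *\<^sub>v x) $ i)^2)"
    "x \<bullet> x = (\<Sum>i<n. ((transpose_mat U *\<^sub>v x) $ i)^2)"
proof -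
  define z where "z = transpose_mat U *\<^sub>v x"
  have z: "z \<in> carrier_vec n" unfolding z_def using U x by auto
  have D: "diagm es \<in> carrier_mat n n" using es by auto
  have "L *\<^sub>v x = U *\<^sub>v (diagm es *\<^sub>v z)" unfolding L z_def using U D x
    by (simp add: assoc_mult_mat_vec[of _ n n _ n _ ] )
  hence "x \<bullet> (L *\<^sub>v x) = z \<bullet> (diagm es *\<^sub>v z)"
    using transpose_vec_mult_scalar[OF U(1), of "diagm es *\<^sub>v z" x] D x z unfolding z_def by auto
  also have "\<dots> = (\<Sum>i<n. es!i * (z $ i)^2)"
    unfolding scalar_prod_def using z D es
    by (auto simp: diagm_def mult_mat_vec_def scalar_prod_def power2_eq_square atLeast0LessThan
       if_distrib[where f="\<lambda>t. t * _"] cong: if_cong intro!: sum.cong)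
  finally show "x \<bullet> (L *\<^sub>v x) = (\<Sum>i<n. es!i * ((transpose_mat U *\<^sub>v x) $ i)^2)" unfolding z_def .
  have "x = U *\<^sub>v z" unfolding z_def using U x
    by (simp add: assoc_mult_mat_vec[symmetric, of _ n n _ n])
  hence "x \<bullet> x = z \<bullet> z"
    using transpose_vec_mult_scalar[OF U(1), of z x] x z unfolding z_def by metis
  also have "\<dots> = (\<Sum>i<n. (z $ i)^2)" unfolding scalar_prod_def using z
    by (auto simp: power2_eq_square atLeast0LessThan)
  finally show "x \<bullet> x = (\<Sum>i<n. ((transpose_mat U *\<^sub>v x) $ i)^2)" unfolding z_def .
qed

lemma sq_pos_vec: fixes x :: "real vec" shows "x \<in> carrier_vec n \<Longrightarrow> x \<noteq> 0\<^sub>v n \<Longrightarrow> x \<bullet> x > 0"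
  using conjugate_square_greater_0_vec[of x] by simp

lemma sum_two_delta:
  fixes g :: "nat \<Rightarrow> real"
  assumes "i < n" "j < n" "i \<noteq> j"
  shows "(\<Sum>k<n. g k * (vec n (\<lambda>k. if k = i then a else if k = j then b else 0) $ k)^2) = g i * a^2 + g j * b^2"
proof -
  have "(\<Sum>k<n. g k * (vec n (\<lambda>k. if k = i then a else if k = j then b else 0) $ k)^2)
     = (\<Sum>k<n. (if k = i then g i * a^2 else 0) + (if k = j then g j * b^2 else 0))"
    using assms by (intro sum.cong) auto
  also have "\<dots> = g i * a^2 + g j * b^2" using assms by (simp add: sum.distrib)
  finally show ?thesis .
qed

lemma two_index:
  fixes L :: "real mat"
  assumes U: "U \<in> carrier_mat n n" "transpose_mat U * U = 1\<^sub>m n" "U * transpose_mat U = 1\<^sub>m n"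
    and es: "length es = n" and L: "L = U * diagm es * transpose_mat U"
    and ij: "i < n" "j < n" "i \<noteq> j" and w: "w \<in> carrier_vec n"
  shows "\<exists>x \<in> carrier_vec n. x \<noteq> 0\<^sub>v n \<and> x \<bullet> w = 0 \<and> x \<bullet> (L *\<^sub>v x) \<ge> min (es!i) (es!j) * (x \<bullet> x)"
proof -
  define t where "t = transpose_mat U *\<^sub>v w"
  have t: "t \<in> carrier_vec n" unfolding t_def using U w by auto
  define a where "a = (if t $ i = 0 \<and> t $ j = 0 then 1 else t $ j)"
  define b where "b = (if t $ i = 0 \<and> t $ j = 0 then 0 else - t $ i)"
  have ab: "a \<noteq> 0 \<or> b \<noteq> 0" unfolding a_def b_def by auto
  have tab: "t $ i * a + t $ j * b = 0" unfolding a_def b_def by auto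
  define z where "z = vec n (\<lambda>k. if k = i then a else if k = j then b else 0)"
  have z: "z \<in> carrier_vec n" unfolding z_def by auto
  define x where "x = U *\<^sub>v z"
  have x: "x \<in> carrier_vec n" unfolding x_def using U z by auto
  have tx: "transpose_mat U *\<^sub>v x = z" unfolding x_def using U z
    by (simp add: assoc_mult_mat_vec[symmetric, of _ n n _ n])
  have "x \<bullet> w = w \<bullet> x" using x w by (rule comm_scalar_prod)
  also have "\<dots> = t \<bullet> z" unfolding x_def t_def using transpose_vec_mult_scalar[OF U(1) z w] ..
  also have "\<dots> = (\<Sum>k<n. t $ k * z $ k)" unfolding scalar_prod_def using z by (simp add: atLeast0LessThan)
  also have "\<dots> = (\<Sum>k<n. (if k = i then t $ i * a else 0) + (if k = j then t $ j * b else 0))"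
    using ij unfolding z_def by (intro sum.cong) auto
  also have "\<dots> = 0" using ij tab by (simp add: sum.distrib)
  finally have xw: "x \<bullet> w = 0" .
  have x0: "x \<noteq> 0\<^sub>v n"
  proof
    assume "x = 0\<^sub>v n"
    hence "z = 0\<^sub>v n" using tx U by auto
    hence "z $ i = 0" "z $ j = 0" using ij by auto
    thus False using ab ij unfolding z_def by auto
  qed
  have q: "x \<bullet> (L *\<^sub>v x) = es!i * a^2 + es!j * b^2"
    using quad_spectral(1)[OF U es L x] unfolding tx z_def using sum_two_delta[OF ij, of "\<lambda>k. es!k"] by simp
  have xx: "x \<bullet> x = a^2 + b^2"
    using quad_spectral(2)[OF U es L x] unfolding tx z_def using sum_two_delta[OF ij, of "\<lambda>k. 1"] by simp
  have "min (es!i) (es!j) * (x \<bullet> x) \<le> x \<bullet> (L *\<^sub>v x)"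
    unfolding q xx
    by (smt (verit) distrib_left min_def mult_right_mono zero_le_power2)
  thus ?thesis using x x0 xw by blast
qed

lemma lower_index:
  fixes L :: "real mat"
  assumes U: "U \<in> carrier_mat n n" "transpose_mat U * U = 1\<^sub>m n" "U * transpose_mat U = 1\<^sub>m n"
    and es: "length es = n" and L: "L = U * diagm es * transpose_mat U"
    and i0: "i0 < n" and small: "\<And>k. k < n \<Longrightarrow> k \<noteq> i0 \<Longrightarrow> es!k < c"
    and x: "x \<in> carrier_vec n" and y: "y \<in> carrier_vec n" and x0: "x \<noteq> 0\<^sub>v n" and y0: "y \<noteq> 0\<^sub>v n"
    and xy: "x \<bullet> y = 0"
  shows "\<exists>a b. (a \<cdot>\<^sub>v x + b \<cdot>\<^sub>v y) \<bullet> (L *\<^sub>v (a \<cdot>\<^sub>v x + b \<cdot>\<^sub>v y)) < c * ((a \<cdot>\<^sub>v x + b \<cdot>\<^sub>v y) \<bullet> (a \<cdot>\<^sub>v x + b \<cdot>\<^sub>v y))"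
proof -
  define tx where "tx = transpose_mat U *\<^sub>v x"
  define ty where "ty = transpose_mat U *\<^sub>v y"
  define a where "a = (if tx $ i0 = 0 \<and> ty $ i0 = 0 then 1 else ty $ i0)"
  define b where "b = (if tx $ i0 = 0 \<and> ty $ i0 = 0 then 0 else - tx $ i0)"
  have ab: "a \<noteq> 0 \<or> b \<noteq> 0" unfolding a_def b_def by auto
  define v where "v = a \<cdot>\<^sub>v x + b \<cdot>\<^sub>v y"
  have v: "v \<in> carrier_vec n" unfolding v_def using x y by auto
  define z where "z = transpose_mat U *\<^sub>v v"
  have z: "z \<in> carrier_vec n" unfolding z_def using U v by auto
  have "z = a \<cdot>\<^sub>v tx + b \<cdot>\<^sub>v ty" unfolding z_def v_def tx_def ty_def using U x y
    by (simp add: mult_add_distrib_mat_vec[of _ n n] mult_mat_vec[of _ n n])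
  hence zi0: "z $ i0 = 0" using i0 U x y unfolding a_def b_def tx_def ty_def by auto
  have xx: "x \<bullet> x > 0" using sq_pos_vec[OF x x0] .
  have yy: "y \<bullet> y > 0" using sq_pos_vec[OF y y0] .
  have vx: "v \<bullet> x = a * (x \<bullet> x)" unfolding v_def using x y xy
    by (simp add: add_scalar_prod_distrib[of _ n] smult_scalar_prod_distrib[of _ n] comm_scalar_prod[of y n x])
  have vy: "v \<bullet> y = b * (y \<bullet> y)" unfolding v_def using x y xy
    by (simp add: add_scalar_prod_distrib[of _ n] smult_scalar_prod_distrib[of _ n])
  have v0: "v \<noteq> 0\<^sub>v n"
  proof
    assume "v = 0\<^sub>v n"
    hence "v \<bullet> x = 0" "v \<bullet> y = 0" using x y by auto
    thus False using vx vy xx yy ab by auto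
  qed
  have vv: "(\<Sum>k<n. (z $ k)^2) > 0" using quad_spectral(2)[OF U es L v] sq_pos_vec[OF v v0]
    unfolding z_def by simp
  then obtain k where k: "k < n" "z $ k \<noteq> 0"
    by (metis (no_types, lifting) lessThan_iff power_zero_numeral sum.neutral less_irrefl)
  have ki0: "k \<noteq> i0" using k zi0 by auto
  have "(\<Sum>k<n. es!k * (z $ k)^2) < (\<Sum>k<n. c * (z $ k)^2)"
  proof (rule sum_strict_mono_ex1)
    show "\<forall>x\<in>{..<n}. es ! x * (z $ x)\<^sup>2 \<le> c * (z $ x)\<^sup>2"
    proof
      fix l assume "l \<in> {..<n}"
      thus "es ! l * (z $ l)\<^sup>2 \<le> c * (z $ l)\<^sup>2"
        using small[of l] zi0 by (cases "l = i0") (auto intro: mult_right_mono)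
    qed
    show "\<exists>a\<in>{..<n}. es ! a * (z $ a)\<^sup>2 < c * (z $ a)\<^sup>2"
      using k ki0 small[of k] by (intro bexI[of _ k]) auto
  qed simp
  hence "v \<bullet> (L *\<^sub>v v) < c * (v \<bullet> v)"
    using quad_spectral[OF U es L v] unfolding z_def by (simp add: sum_distrib_left)
  thus ?thesis unfolding v_def by blast
qed

lemma rev_sort_mono:
  fixes es :: "real list"
  assumes "k < length es" "l \<le> k"
  shows "rev (sort es) ! k \<le> rev (sort es) ! l"
proof -
  have "rev (sort es) ! k = sort es ! (length es - Suc k)" using assms by (simp add: rev_nth)
  also have "\<dots> \<le> sort es ! (length es - Suc l)"
    using assms by (intro sorted_nth_mono) auto
  also have "\<dots> = rev (sort es) ! l" using assms by (simp add: rev_nth)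
  finally show ?thesis .
qed

lemma filter_card_perm:
  fixes es :: "real list"
  shows "card {i. i < length es \<and> P (es!i)} = card {i. i < length es \<and> P (rev (sort es) ! i)}"
proof -
  have "length (filter P es) = length (filter P (rev (sort es)))"
    by (metis mset_filter mset_rev mset_sort size_mset)
  thus ?thesis unfolding length_filter_conv_card by simp
qed

lemma two_above:
  fixes es :: "real list"
  assumes len: "length es \<ge> 2" and P: "P (rev (sort es) ! 1)" and mono: "\<And>a b. P a \<Longrightarrow> a \<le> b \<Longrightarrow> P b"
  shows "\<exists>i j. i < length es \<and> j < length es \<and> i \<noteq> j \<and> P (es!i) \<and> P (es!j)"
proof -
  let ?S = "{i. i < length es \<and> P (es!i)}"
  have P0: "P (rev (sort es) ! 0)" using mono[OF P rev_sort_mono[of 1 es 0]] len by auto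
  have "{0,1} \<subseteq> {i. i < length es \<and> P (rev (sort es) ! i)}" using P P0 len by auto
  hence "card {0::nat,1} \<le> card {i. i < length es \<and> P (rev (sort es) ! i)}"
    by (intro card_mono) auto
  hence c2: "card ?S \<ge> 2" unfolding filter_card_perm[symmetric] by simp
  have fin: "finite ?S" by auto
  have "?S \<noteq> {}" using c2 by (intro notI) simp
  then obtain i where i: "i \<in> ?S" by blast
  have "card (?S - {i}) \<ge> 1" using c2 i fin by (simp add: card_Diff_singleton)
  hence "?S - {i} \<noteq> {}" by (intro notI) simp
  then obtain j where j: "j \<in> ?S - {i}" by blast
  show ?thesis using i j by blast
qed

lemma at_most_one_above:
  fixes es :: "real list"
  assumes len: "length es \<ge> 2" and lt: "rev (sort es) ! 1 < c"
  shows "\<exists>i0 < length es. \<forall>k < length es. k \<noteq> i0 \<longrightarrow> es!k < c"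
proof -
  let ?S = "{i. i < length es \<and> \<not> es!i < c}"
  let ?T = "{i. i < length es \<and> \<not> rev (sort es) ! i < c}"
  have sub: "?T \<subseteq> {0}"
  proof
    fix k assume k: "k \<in> ?T"
    show "k \<in> {0}"
    proof (rule ccontr)
      assume "k \<notin> {0}"
      hence k1: "1 \<le> k" by simp
      have "k < length es" using k by simp
      from this k1
      have "rev (sort es) ! k \<le> rev (sort es) ! 1" by (rule rev_sort_mono)
      moreover have "\<not> rev (sort es) ! k < c" using k by simp
      ultimately show False using lt by linarith
    qed
  qed
  have "card ?T \<le> card {0::nat}" by (rule card_mono[OF _ sub]) simp
  hence "card ?T \<le> 1" by simp
  hence c1: "card ?S \<le> 1" using filter_card_perm[of es "\<lambda>e. \<not> e < c"] by simp
  have fin: "finite ?S" by simp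
  show ?thesis
  proof (cases "?S = {}")
    case True
    have "0 < length es" using len by linarith
    moreover have "\<forall>k < length es. k \<noteq> 0 \<longrightarrow> es!k < c" using True by blast
    ultimately show ?thesis by blast
  next
    case False
    then obtain i0 where i0: "i0 \<in> ?S" by blast
    have "card ?S \<le> Suc 0" using c1 by simp
    hence "\<forall>a1\<in>?S. \<forall>a2\<in>?S. a1 = a2" using card_le_Suc0_iff_eq[OF fin] by blast
    hence "\<forall>k < length es. k \<noteq> i0 \<longrightarrow> es!k < c" using i0 by blast
    moreover have "i0 < length es" using i0 by simp
    ultimately show ?thesis by blast
  qed
qed

definition qf :: "nat \<Rightarrow> (nat \<Rightarrow> nat \<Rightarrow> bool) \<Rightarrow> real vec \<Rightarrow> real" where
  "qf n F x = (\<Sum>i<n. \<Sum>j<n. if F i j then (x $ i + x $ j)^2 else 0)"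

lemma qf_nonneg: "qf n F x \<ge> 0"
  unfolding qf_def by (intro sum_nonneg) auto

lemma quadform_sum:
  fixes A :: "real mat"
  assumes A: "A \<in> carrier_mat n n" and x: "x \<in> carrier_vec n"
  shows "x \<bullet> (A *\<^sub>v x) = (\<Sum>i<n. \<Sum>j<n. x $ i * A $$ (i,j) * x $ j)"
  using A x by (auto simp: scalar_prod_def mult_mat_vec_def sum_distrib_left atLeast0LessThan mult.assoc
      intro!: sum.cong)

lemma sl_carrier[simp]: "signless_laplacian n F \<in> carrier_mat n n"
  unfolding signless_laplacian_def by auto

lemma sl_index: "i < n \<Longrightarrow> j < n \<Longrightarrow> signless_laplacian n F $$ (i,j) =
   (if i = j then real (degree n F i) else 0) + (if F i j then 1 else 0)"
  unfolding signless_laplacian_def by auto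

lemma degree_sum: "real (degree n F i) = (\<Sum>j<n. if F i j then 1 else 0)"
proof -
  have "(\<Sum>j<n. if F i j then 1 else (0::real)) = real (card ({..<n} \<inter> Collect (F i)))"
    by (simp add: sum.If_cases)
  also have "{..<n} \<inter> Collect (F i) = {j. j < n \<and> F i j}" by auto
  finally show ?thesis unfolding degree_def by (simp only:)
qed

lemma quad_sl:
  assumes x: "x \<in> carrier_vec n" and sym: "\<And>i j. i < n \<Longrightarrow> j < n \<Longrightarrow> F i j = F j i"
  shows "x \<bullet> (signless_laplacian n F *\<^sub>v x) = qf n F x / 2"
proof -
  have "x \<bullet> (signless_laplacian n F *\<^sub>v x) = (\<Sum>i<n. \<Sum>j<n. x $ i * ((if i = j then real (degree n F i) else 0) + (if F i j then 1 else 0)) * x $ j)"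
    using quadform_sum[OF sl_carrier x] sl_index by simp
  also have "\<dots> = (\<Sum>i<n. real (degree n F i) * (x $ i)^2) + (\<Sum>i<n. \<Sum>j<n. if F i j then x $ i * x $ j else 0)"
    by (simp add: algebra_simps sum.distrib power2_eq_square if_distrib[where f="\<lambda>t. _ * t"] if_distrib[where f="\<lambda>t. t * _"] cong: if_cong)
  also have "(\<Sum>i<n. real (degree n F i) * (x $ i)^2) = (\<Sum>i<n. \<Sum>j<n. if F i j then (x $ i)^2 else 0)"
    unfolding degree_sum by (simp add: sum_distrib_right if_distrib[where f="\<lambda>t. t * _"] cong: if_cong)
  finally have e1: "x \<bullet> (signless_laplacian n F *\<^sub>v x) = (\<Sum>i<n. \<Sum>j<n. if F i j then (x $ i)^2 else 0) + (\<Sum>i<n. \<Sum>j<n. if F i j then x $ i * x $ j else 0)" .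
  have sw: "(\<Sum>i<n. \<Sum>j<n. if F i j then (x $ i)^2 else 0) = (\<Sum>i<n. \<Sum>j<n. if F i j then (x $ j)^2 else 0)"
    by (subst sum.swap) (auto intro!: sum.cong simp: sym)
  have "qf n F x = (\<Sum>i<n. \<Sum>j<n. if F i j then (x $ i)^2 else 0) + (\<Sum>i<n. \<Sum>j<n. if F i j then (x $ j)^2 else 0)
       + 2 * (\<Sum>i<n. \<Sum>j<n. if F i j then x $ i * x $ j else 0)"
  proof -
    have t: "\<And>i j. (if F i j then (x $ i + x $ j)^2 else 0) = (if F i j then (x $ i)^2 else 0) + (if F i j then (x $ j)^2 else 0) + 2 * (if F i j then x $ i * x $ j else 0)"
      by (auto simp: power2_eq_square algebra_simps)
    show ?thesis unfolding qf_def t by (simp only: sum.distrib sum_distrib_left)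
  qed
  thus ?thesis unfolding e1 using sw by simp
qed

lemma deg_compl:
  assumes sg: "simple_graph n E" and i: "i < n"
  shows "real (degree n E i) + real (degree n (complement n E) i) = real n - 1"
proof -
  have irr: "\<not> E i i" using sg i unfolding simple_graph_def by auto
  have d: "{j. j < n \<and> E i j} \<inter> {j. j < n \<and> complement n E i j} = {}"
    unfolding complement_def by auto
  have u: "{j. j < n \<and> E i j} \<union> {j. j < n \<and> complement n E i j} = {..<n} - {i}"
    unfolding complement_def using irr i by auto
  have "degree n E i + degree n (complement n E) i = card ({..<n} - {i})"
    unfolding degree_def u[symmetric] by (subst card_Un_disjoint) (use d in auto)
  also have "\<dots> = n - 1" using i by simp
  finally have "degree n E i + degree n (complement n E) i = n - 1" .
  hence "real (degree n E i + degree n (complement n E) i) = real (n - 1)" by simp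
  thus ?thesis using i by (simp add: of_nat_diff)
qed

lemma entry_sum:
  assumes sg: "simple_graph n E" and i: "i < n" and j: "j < n"
  shows "signless_laplacian n E $$ (i,j) + signless_laplacian n (complement n E) $$ (i,j)
     = 1 + (if i = j then real n - 2 else 0)"
proof (cases "i = j")
  case True
  have irr: "\<not> E i i" using sg i unfolding simple_graph_def by auto
  show ?thesis using True deg_compl[OF sg i] irr i
    by (simp add: sl_index complement_def)
next
  case False
  thus ?thesis using i j by (auto simp: sl_index complement_def)
qed

lemma key_identity:
  assumes sg: "simple_graph n E" and x: "x \<in> carrier_vec n"
  shows "x \<bullet> (signless_laplacian n E *\<^sub>v x) =
    (\<Sum>i<n. x $ i)^2 + (real n - 2) * (x \<bullet> x) - x \<bullet> (signless_laplacian n (complement n E) *\<^sub>v x)"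
proof -
  let ?Q = "signless_laplacian n E" and ?M = "signless_laplacian n (complement n E)"
  have "x \<bullet> (?Q *\<^sub>v x) + x \<bullet> (?M *\<^sub>v x) = (\<Sum>i<n. \<Sum>j<n. x $ i * ?Q $$ (i,j) * x $ j + x $ i * ?M $$ (i,j) * x $ j)"
    unfolding quadform_sum[OF sl_carrier x] by (simp add: sum.distrib)
  also have "\<dots> = (\<Sum>i<n. \<Sum>j<n. x $ i * x $ j + (if i = j then (real n - 2) * (x $ i * x $ i) else 0))"
  proof (intro sum.cong refl)
    fix i j assume "i \<in> {..<n}" "j \<in> {..<n}"
    hence qm: "?Q $$ (i,j) + ?M $$ (i,j) = 1 + (if i = j then real n - 2 else 0)"
      using entry_sum[OF sg] by auto
    show "x $ i * ?Q $$ (i,j) * x $ j + x $ i * ?M $$ (i,j) * x $ j = x $ i * x $ j + (if i = j then (real n - 2) * (x $ i * x $ i) else 0)"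
    proof -
      have "x $ i * ?Q $$ (i,j) * x $ j + x $ i * ?M $$ (i,j) * x $ j = x $ i * x $ j * (?Q $$ (i,j) + ?M $$ (i,j))"
        by (simp add: algebra_simps)
      also have "\<dots> = x $ i * x $ j * (1 + (if i = j then real n - 2 else 0))" unfolding qm ..
      also have "\<dots> = x $ i * x $ j + (if i = j then (real n - 2) * (x $ i * x $ i) else 0)"
        by (cases "i = j") (simp_all add: algebra_simps)
      finally show ?thesis .
    qed
  qed
  also have "\<dots> = (\<Sum>i<n. x $ i)^2 + (real n - 2) * (x \<bullet> x)"
  proof -
    have "(\<Sum>i<n. \<Sum>j<n. x $ i * x $ j + (if i = j then (real n - 2) * (x $ i * x $ i) else 0))
      = (\<Sum>i<n. \<Sum>j<n. x $ i * x $ j) + (\<Sum>i<n. (real n - 2) * (x $ i * x $ i))"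
      by (simp add: sum.distrib)
    also have "(\<Sum>i<n. \<Sum>j<n. x $ i * x $ j) = (\<Sum>i<n. x $ i)^2"
      by (simp add: power2_eq_square sum_product)
    also have "(\<Sum>i<n. (real n - 2) * (x $ i * x $ i)) = (real n - 2) * (x \<bullet> x)"
      using x by (simp add: scalar_prod_def atLeast0LessThan sum_distrib_left)
    finally show ?thesis .
  qed
  finally show ?thesis by simp
qed

lemma sl_sym: "simple_graph n E \<Longrightarrow> i < n \<Longrightarrow> j < n \<Longrightarrow>
  signless_laplacian n E $$ (i,j) = signless_laplacian n E $$ (j,i)"
  by (auto simp: sl_index simple_graph_def)

lemma compl_sym: "complement n E i j = complement n E j i" if "simple_graph n E"
  using that unfolding complement_def simple_graph_def by auto

definition cmp :: "nat \<Rightarrow> (nat \<Rightarrow> nat \<Rightarrow> bool) \<Rightarrow> nat \<Rightarrow> nat set" where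
  "cmp n F v = {u. u < n \<and> (adj_in n F)\<^sup>*\<^sup>* v u}"

lemma components_cmp: "components n F = {cmp n F v | v. v < n}"
  unfolding components_def cmp_def ..

locale sgraph =
  fixes n :: nat and F :: "nat \<Rightarrow> nat \<Rightarrow> bool"
  assumes sym: "F i j \<Longrightarrow> F j i" and bnd: "F i j \<Longrightarrow> i < n \<and> j < n"
begin

lemma adj_iff: "adj_in n F u v \<longleftrightarrow> F u v"
  unfolding adj_in_def using bnd by auto

lemma reach_sym: "(adj_in n F)\<^sup>*\<^sup>* u v \<Longrightarrow> (adj_in n F)\<^sup>*\<^sup>* v u"
proof (induction rule: rtranclp_induct)
  case base thus ?case by simp
next
  case (step y z)
  have "adj_in n F z y" using step(2) sym unfolding adj_iff by auto
  thus ?case using step(3) by (meson converse_rtranclp_into_rtranclp)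
qed

lemma cmp_self: "v < n \<Longrightarrow> v \<in> cmp n F v" unfolding cmp_def by auto

lemma cmp_sub: "cmp n F v \<subseteq> {..<n}" unfolding cmp_def by auto

lemma cmp_fin: "finite (cmp n F v)" using cmp_sub finite_subset by blast

lemma cmp_edge: "u \<in> cmp n F v \<Longrightarrow> F u w \<Longrightarrow> w \<in> cmp n F v"
  unfolding cmp_def using bnd adj_iff
  by (auto intro: rtranclp.rtrancl_into_rtrancl)

lemma cmp_edge_iff: "F u w \<Longrightarrow> u \<in> cmp n F v \<longleftrightarrow> w \<in> cmp n F v"
  using cmp_edge sym by blast

lemma cmp_eq: "u \<in> cmp n F v \<Longrightarrow> cmp n F u = cmp n F v"
  unfolding cmp_def using reach_sym
  by (auto intro: rtranclp_trans)

lemma sign_prop: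
  fixes x :: "real vec"
  assumes edge: "\<And>i j. F i j \<Longrightarrow> x $ i + x $ j = 0"
    and u: "u \<in> cmp n F k"
  shows "x $ u = x $ k \<or> x $ u = - x $ k"
proof -
  have "(adj_in n F)\<^sup>*\<^sup>* k u" using u unfolding cmp_def by auto
  thus ?thesis
  proof (induction rule: rtranclp_induct)
    case base thus ?case by simp
  next
    case (step y z)
    have "x $ y + x $ z = 0" using edge step(2) adj_iff by auto
    thus ?case using step(3) by auto
  qed
qed

lemma sign_bip:
  fixes x :: "real vec"
  assumes edge: "\<And>i j. F i j \<Longrightarrow> x $ i + x $ j = 0" and xk: "x $ k \<noteq> 0"
  defines "A \<equiv> {u \<in> cmp n F k. x $ u = x $ k}" and "B \<equiv> {u \<in> cmp n F k. x $ u = - x $ k}"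
  shows "bipartition F (cmp n F k) A B"
    "(\<Sum>u\<in>cmp n F k. x $ u) = x $ k * (real (card A) - real (card B))"
proof -
  have dis: "A \<inter> B = {}" unfolding A_def B_def using xk by auto
  have un: "A \<union> B = cmp n F k" unfolding A_def B_def using sign_prop[OF edge] by auto
  show "bipartition F (cmp n F k) A B"
    unfolding bipartition_def
  proof (intro conjI dis un ballI impI)
    fix u v assume "u \<in> cmp n F k" "v \<in> cmp n F k" "F u v"
    hence "x $ u + x $ v = 0" using edge by auto
    thus "(u \<in> A) = (v \<in> B)" unfolding A_def B_def using \<open>u \<in> cmp n F k\<close> \<open>v \<in> cmp n F k\<close> by auto
  qed
  have fA: "finite A" and fB: "finite B" unfolding A_def B_def using cmp_fin by auto
  have "(\<Sum>u\<in>cmp n F k. x $ u) = (\<Sum>u\<in>A. x $ u) + (\<Sum>u\<in>B. x $ u)"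
    unfolding un[symmetric] using sum.union_disjoint[OF fA fB dis] by simp
  also have "\<dots> = (\<Sum>u\<in>A. x $ k) + (\<Sum>u\<in>B. - x $ k)"
    unfolding A_def B_def by simp
  also have "\<dots> = x $ k * (real (card A) - real (card B))" by (simp add: algebra_simps)
  finally show "(\<Sum>u\<in>cmp n F k. x $ u) = x $ k * (real (card A) - real (card B))" .
qed

lemma comb_forward:
  fixes x :: "real vec"
  assumes edge: "\<And>i j. F i j \<Longrightarrow> x $ i + x $ j = 0"
    and k: "k < n" and xk: "x $ k \<noteq> 0" and s0: "(\<Sum>i<n. x $ i) = 0"
  shows "(\<exists>C\<in>components n F. balanced_comp F C) \<or>
     (\<exists>C1\<in>components n F. \<exists>C2\<in>components n F. C1 \<noteq> C2 \<and> bipartite_comp F C1 \<and> bipartite_comp F C2)"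
proof -
  define C where "C = cmp n F k"
  define A where "A = {u \<in> cmp n F k. x $ u = x $ k}"
  define B where "B = {u \<in> cmp n F k. x $ u = - x $ k}"
  have bip: "bipartition F C A B" and sC: "(\<Sum>u\<in>C. x $ u) = x $ k * (real (card A) - real (card B))"
    using sign_bip[OF edge xk] unfolding A_def B_def C_def by auto
  have Cc: "C \<in> components n F" unfolding components_cmp C_def using k by auto
  show ?thesis
  proof (cases "card A = card B")
    case True
    hence "balanced_comp F C" using bip unfolding balanced_comp_def by auto
    thus ?thesis using Cc by auto
  next
    case False
    hence sne: "(\<Sum>u\<in>C. x $ u) \<noteq> 0" using sC xk by auto
    have "(\<Sum>i<n. x $ i) = (\<Sum>u\<in>C. x $ u) + (\<Sum>u\<in>{..<n} - C. x $ u)"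
      using cmp_sub[of k] unfolding C_def by (metis add.commute finite_lessThan sum.subset_diff)
    hence "(\<Sum>u\<in>{..<n} - C. x $ u) \<noteq> 0" using s0 sne by auto
    then obtain w where w: "w \<in> {..<n} - C" "x $ w \<noteq> 0" by (meson sum.neutral)
    define C2 where "C2 = cmp n F w"
    have C2c: "C2 \<in> components n F" unfolding components_cmp C2_def using w by auto
    have "C2 \<noteq> C" using cmp_self[of w] w unfolding C2_def by auto
    moreover have "bipartite_comp F C2" unfolding bipartite_comp_def C2_def
      using sign_bip(1)[OF edge w(2)] by blast
    moreover have "bipartite_comp F C" unfolding bipartite_comp_def using bip by blast
    ultimately show ?thesis using Cc C2c by blast
  qed
qed

end

lemma dsum: fixes p q r s :: "nat \<Rightarrow> real"
  shows "(\<Sum>i<n. \<Sum>j<n. c * (p i * q j + r i * s j)) = c * ((\<Sum>i<n. p i) * (\<Sum>j<n. q j) + (\<Sum>i<n. r i) * (\<Sum>j<n. s j))"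
  unfolding sum_product by (simp add: sum.distrib sum_distrib_left distrib_left)

lemma ind_sum: fixes n :: nat shows "S \<subseteq> {..<n} \<Longrightarrow> (\<Sum>i<n. if i \<in> S then 1 else 0 :: real) = real (card S)"
proof -
  assume S: "S \<subseteq> {..<n}"
  have "(\<Sum>i<n. if i \<in> S then 1 else 0 :: real) = real (card ({..<n} \<inter> S))"
    using sum.inter_restrict[OF finite_lessThan, of "\<lambda>_. 1::real" n S] by (simp add: atLeast0LessThan)
  also have "{..<n} \<inter> S = S" using S by auto
  finally show ?thesis .
qed

definition sgnv :: "nat \<Rightarrow> nat set \<Rightarrow> nat set \<Rightarrow> real vec" where
  "sgnv n A B = vec n (\<lambda>i. if i \<in> A then 1 else if i \<in> B then -1 else 0)"

definition indv :: "nat \<Rightarrow> nat set \<Rightarrow> real vec" where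
  "indv n C = vec n (\<lambda>i. if i \<in> C then 1 else 0)"

context sgraph
begin

lemma sgn_edge:
  assumes bip: "bipartition F (cmp n F v) A B" and e: "F i j"
  shows "sgnv n A B $ i + sgnv n A B $ j = 0"
proof -
  have ij: "i < n" "j < n" using bnd[OF e] by auto
  have dis: "A \<inter> B = {}" and un: "A \<union> B = cmp n F v"
    and cr: "\<And>u w. u \<in> cmp n F v \<Longrightarrow> w \<in> cmp n F v \<Longrightarrow> F u w \<Longrightarrow> (u \<in> A \<longleftrightarrow> w \<in> B)"
    using bip unfolding bipartition_def by auto
  show ?thesis
  proof (cases "i \<in> cmp n F v")
    case True
    hence j: "j \<in> cmp n F v" using cmp_edge e by blast
    have "i \<in> A \<longleftrightarrow> j \<in> B" using cr[OF True j e] .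
    thus ?thesis using True j dis un ij unfolding sgnv_def by auto
  next
    case False
    hence "j \<notin> cmp n F v" using cmp_edge_iff[OF e] by blast
    thus ?thesis using False un ij unfolding sgnv_def by auto
  qed
qed

lemma sgn_nz:
  assumes bip: "bipartition F (cmp n F v) A B" and v: "v < n"
  shows "sgnv n A B \<noteq> 0\<^sub>v n"
proof
  assume z: "sgnv n A B = 0\<^sub>v n"
  have "v \<in> A \<union> B" using bip cmp_self[OF v] unfolding bipartition_def by auto
  hence "sgnv n A B $ v \<noteq> 0" using v unfolding sgnv_def by auto
  thus False using z v by auto
qed

lemma sgn_supp:
  assumes bip: "bipartition F (cmp n F v) A B" and i: "i \<notin> cmp n F v" and "i < n"
  shows "sgnv n A B $ i = 0"
  using bip i \<open>i < n\<close> unfolding bipartition_def sgnv_def by auto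

lemma comb_backward:
  assumes H: "(\<exists>C\<in>components n F. balanced_comp F C) \<or>
     (\<exists>C1\<in>components n F. \<exists>C2\<in>components n F. C1 \<noteq> C2 \<and> bipartite_comp F C1 \<and> bipartite_comp F C2)"
  shows "\<exists>x y. x \<in> carrier_vec n \<and> y \<in> carrier_vec n \<and> x \<noteq> 0\<^sub>v n \<and> y \<noteq> 0\<^sub>v n \<and> x \<bullet> y = 0 \<and>
     (\<forall>a b. qf n F (a \<cdot>\<^sub>v x + b \<cdot>\<^sub>v y) \<le> 2 * (\<Sum>i<n. (a \<cdot>\<^sub>v x + b \<cdot>\<^sub>v y) $ i)^2)"
  using H
proof
  assume "\<exists>C\<in>components n F. balanced_comp F C"
  then obtain v0 A B where v0: "v0 < n" and bip: "bipartition F (cmp n F v0) A B" and cAB: "card A = card B"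
    unfolding components_cmp balanced_comp_def by auto
  define C where "C = cmp n F v0"
  have dis: "A \<inter> B = {}" and un: "A \<union> B = C" using bip unfolding bipartition_def C_def by auto
  have Cs: "C \<subseteq> {..<n}" unfolding C_def by (rule cmp_sub)
  have As: "A \<subseteq> {..<n}" and Bs: "B \<subseteq> {..<n}" using un Cs by auto
  have fA: "finite A" and fB: "finite B" using As Bs finite_subset by auto
  define x where "x = sgnv n A B"
  define y where "y = indv n C"
  have x: "x \<in> carrier_vec n" and y: "y \<in> carrier_vec n" unfolding x_def y_def sgnv_def indv_def by auto
  have x0: "x \<noteq> 0\<^sub>v n" unfolding x_def using sgn_nz[OF bip v0] .
  have y0: "y \<noteq> 0\<^sub>v n"
  proof
    assume "y = 0\<^sub>v n"
    hence "y $ v0 = 0" using v0 by auto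
    thus False using cmp_self[OF v0] v0 unfolding y_def indv_def C_def by auto
  qed
  have sx: "(\<Sum>i<n. x $ i) = 0"
  proof -
    have "(\<Sum>i<n. x $ i) = (\<Sum>i<n. (if i \<in> A then 1 else 0) - (if i \<in> B then 1 else 0 :: real))"
      unfolding x_def sgnv_def using dis by (intro sum.cong) auto
    also have "\<dots> = real (card A) - real (card B)" by (simp add: sum_subtractf ind_sum[OF As] ind_sum[OF Bs])
    finally show ?thesis using cAB by simp
  qed
  have xy: "x \<bullet> y = 0"
  proof -
    have "x \<bullet> y = (\<Sum>i<n. x $ i)" unfolding scalar_prod_def using y
      by (auto simp: atLeast0LessThan y_def indv_def x_def sgnv_def un[symmetric] intro!: sum.cong)
    thus ?thesis using sx by simp
  qed
  have sy: "(\<Sum>i<n. y $ i) = real (card C)" unfolding y_def indv_def using ind_sum[OF Cs] by simp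
  have cC: "card C = 2 * card A" using card_Un_disjoint[OF fA fB dis] un cAB by simp
  have bound: "qf n F (a \<cdot>\<^sub>v x + b \<cdot>\<^sub>v y) \<le> 2 * (\<Sum>i<n. (a \<cdot>\<^sub>v x + b \<cdot>\<^sub>v y) $ i)^2" for a b
  proof -
    define v where "v = a \<cdot>\<^sub>v x + b \<cdot>\<^sub>v y"
    have vi: "\<And>i. i < n \<Longrightarrow> v $ i = a * x $ i + b * y $ i" unfolding v_def using x y by auto
    have "(\<Sum>i<n. v $ i) = a * (\<Sum>i<n. x $ i) + b * (\<Sum>i<n. y $ i)"
      using vi by (simp add: sum.distrib sum_distrib_left)
    hence sv: "(\<Sum>i<n. v $ i) = b * (2 * real (card A))" using sx sy cC by simp
    have trm: "(if F i j then (v $ i + v $ j)^2 else 0) \<le>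
        4 * b^2 * ((if i \<in> A then 1 else 0) * (if j \<in> B then 1 else 0) + (if i \<in> B then 1 else 0) * (if j \<in> A then 1 else 0))"
      if ij: "i < n" "j < n" for i j
    proof (cases "F i j")
      case False thus ?thesis by simp
    next
      case e: True
      have s0: "x $ i + x $ j = 0" unfolding x_def using sgn_edge[OF bip e] .
      show ?thesis
      proof (cases "i \<in> C")
        case True
        hence j: "j \<in> C" using cmp_edge e unfolding C_def by blast
        have "i \<in> A \<longleftrightarrow> j \<in> B" using bip True j e unfolding bipartition_def C_def by auto
        hence r: "(if i \<in> A then 1 else 0) * (if j \<in> B then 1 else 0) + (if i \<in> B then 1 else 0) * (if j \<in> A then 1 else (0::real)) = 1"
          using True j un dis by auto
        have "v $ i + v $ j = a * (x $ i + x $ j) + 2 * b"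
          using vi ij True j unfolding y_def indv_def by (simp add: algebra_simps)
        hence "v $ i + v $ j = 2 * b" using s0 by simp
        thus ?thesis using e r by (simp add: power2_eq_square)
      next
        case False
        hence j: "j \<notin> C" using cmp_edge_iff[OF e] unfolding C_def by blast
        have "x $ i = 0" "x $ j = 0" using sgn_supp[OF bip] False j ij unfolding x_def C_def by auto
        hence "v $ i + v $ j = 0" using vi ij False j unfolding y_def indv_def by simp
        thus ?thesis using e by simp
      qed
    qed
    have "qf n F v \<le> (\<Sum>i<n. \<Sum>j<n. 4 * b^2 * ((if i \<in> A then 1 else 0) * (if j \<in> B then 1 else 0) + (if i \<in> B then 1 else 0) * (if j \<in> A then 1 else 0)))"
      unfolding qf_def by (intro sum_mono) (use trm in auto)
    also have "\<dots> = 4 * b^2 * ((\<Sum>i<n. if i \<in> A then 1 else 0) * (\<Sum>j<n. if j \<in> B then 1 else 0)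
        + (\<Sum>i<n. if i \<in> B then 1 else 0) * (\<Sum>j<n. if j \<in> A then 1 else 0))"
      by (rule dsum)
    also have "\<dots> = 4 * b^2 * (2 * real (card A) * real (card A))"
      unfolding ind_sum[OF As] ind_sum[OF Bs] cAB by simp
    also have "\<dots> = 2 * (\<Sum>i<n. v $ i)^2" unfolding sv by (simp add: power2_eq_square)
    finally show ?thesis unfolding v_def .
  qed
  show ?thesis using x y x0 y0 xy bound by blast
next
  assume "\<exists>C1\<in>components n F. \<exists>C2\<in>components n F. C1 \<noteq> C2 \<and> bipartite_comp F C1 \<and> bipartite_comp F C2"
  then obtain v1 v2 A1 B1 A2 B2 where v1: "v1 < n" and v2: "v2 < n" and ne: "cmp n F v1 \<noteq> cmp n F v2"
    and b1: "bipartition F (cmp n F v1) A1 B1" and b2: "bipartition F (cmp n F v2) A2 B2"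
    unfolding components_cmp bipartite_comp_def by blast
  define x where "x = sgnv n A1 B1"
  define y where "y = sgnv n A2 B2"
  have x: "x \<in> carrier_vec n" and y: "y \<in> carrier_vec n" unfolding x_def y_def sgnv_def by auto
  have x0: "x \<noteq> 0\<^sub>v n" unfolding x_def using sgn_nz[OF b1 v1] .
  have y0: "y \<noteq> 0\<^sub>v n" unfolding y_def using sgn_nz[OF b2 v2] .
  have disj: "\<And>i. i \<in> cmp n F v1 \<Longrightarrow> i \<notin> cmp n F v2"
    using cmp_eq ne by metis
  have xy: "x \<bullet> y = 0"
  proof -
    have "x \<bullet> y = (\<Sum>i<n. x $ i * y $ i)" unfolding scalar_prod_def using y by (simp add: atLeast0LessThan)
    also have "\<dots> = 0"
    proof (intro sum.neutral ballI)
      fix i assume "i \<in> {..<n}"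
      show "x $ i * y $ i = 0"
      proof (cases "i \<in> cmp n F v1")
        case True thus ?thesis using disj sgn_supp[OF b2] \<open>i \<in> {..<n}\<close> unfolding y_def by auto
      next
        case False thus ?thesis using sgn_supp[OF b1] \<open>i \<in> {..<n}\<close> unfolding x_def by auto
      qed
    qed
    finally show ?thesis .
  qed
  have bound: "qf n F (a \<cdot>\<^sub>v x + b \<cdot>\<^sub>v y) \<le> 2 * (\<Sum>i<n. (a \<cdot>\<^sub>v x + b \<cdot>\<^sub>v y) $ i)^2" for a b
  proof -
    have "qf n F (a \<cdot>\<^sub>v x + b \<cdot>\<^sub>v y) = 0"
      unfolding qf_def
    proof (intro sum.neutral ballI)
      fix i j assume i: "i \<in> {..<n}" and j: "j \<in> {..<n}"
      show "(if F i j then ((a \<cdot>\<^sub>v x + b \<cdot>\<^sub>v y) $ i + (a \<cdot>\<^sub>v x + b \<cdot>\<^sub>v y) $ j)^2 else 0) = 0"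
      proof (cases "F i j")
        case True
        have "x $ i + x $ j = 0" "y $ i + y $ j = 0"
          unfolding x_def y_def using sgn_edge[OF b1 True] sgn_edge[OF b2 True] by auto
        have "(a \<cdot>\<^sub>v x + b \<cdot>\<^sub>v y) $ i + (a \<cdot>\<^sub>v x + b \<cdot>\<^sub>v y) $ j = a * (x $ i + x $ j) + b * (y $ i + y $ j)"
          using i j x y by (simp add: algebra_simps)
        also have "\<dots> = 0" using \<open>x $ i + x $ j = 0\<close> \<open>y $ i + y $ j = 0\<close> by simp
        finally show ?thesis by simp
      qed simp
    qed
    thus ?thesis by simp
  qed
  show ?thesis using x y x0 y0 xy bound by blast
qed

end

theorem theorem1:
  fixes n :: nat and E :: "nat \<Rightarrow> nat \<Rightarrow> bool"
  assumes "simple_graph n E" and "n \<ge> 2"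
  shows "q_eig 2 n E = real n - 2 \<longleftrightarrow>
    ((\<exists>C\<in>components n (complement n E). balanced_comp (complement n E) C) \<or>
     (\<exists>C1\<in>components n (complement n E). \<exists>C2\<in>components n (complement n E).
        C1 \<noteq> C2 \<and> bipartite_comp (complement n E) C1 \<and> bipartite_comp (complement n E) C2))"
proof -
  note sg = assms(1)
  define L where "L = signless_laplacian n E"
  define Eb where "Eb = complement n E"
  define c where "c = real n - 2"
  have Lc: "L \<in> carrier_mat n n" unfolding L_def by simp
  obtain U es where U: "U \<in> carrier_mat n n" "transpose_mat U * U = 1\<^sub>m n" "U * transpose_mat U = 1\<^sub>m n"
    and es: "length es = n" and LU: "L = U * diagm es * transpose_mat U"
    using spectral[OF Lc] sl_sym[OF sg] unfolding L_def by blast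
  have q2: "q_eig 2 n E = rev (sort es) ! 1"
    unfolding q_eig_def L_def[symmetric] char_poly_spectral[OF U es LU] by simp
  have les: "length es \<ge> 2" using es assms(2) by simp
  interpret sgraph n Eb
    by unfold_locales (use sg in \<open>auto simp: Eb_def complement_def simple_graph_def\<close>)
  define one where "one = vec n (\<lambda>_. 1::real)"
  have one: "one \<in> carrier_vec n" unfolding one_def by simp
  have xone: "\<And>x. x \<in> carrier_vec n \<Longrightarrow> x \<bullet> one = (\<Sum>i<n. x $ i)"
    unfolding one_def scalar_prod_def by (auto simp: atLeast0LessThan)
  have K: "\<And>x. x \<in> carrier_vec n \<Longrightarrow> x \<bullet> (L *\<^sub>v x) = (\<Sum>i<n. x $ i)^2 + c * (x \<bullet> x) - qf n Eb x / 2"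
  proof -
    fix x :: "real vec" assume x: "x \<in> carrier_vec n"
    have "x \<bullet> (signless_laplacian n Eb *\<^sub>v x) = qf n Eb x / 2"
      by (rule quad_sl[OF x]) (use sym in auto)
    thus "x \<bullet> (L *\<^sub>v x) = (\<Sum>i<n. x $ i)^2 + c * (x \<bullet> x) - qf n Eb x / 2"
      using key_identity[OF sg x] unfolding L_def Eb_def c_def by simp
  qed
  have upper: "rev (sort es) ! 1 \<le> c"
  proof (rule ccontr)
    assume "\<not> rev (sort es) ! 1 \<le> c"
    hence "rev (sort es) ! 1 > c" by simp
    from two_above[OF les, of "\<lambda>e. e > c", OF this] obtain i j where
      ij: "i < length es" "j < length es" "i \<noteq> j" "es!i > c" "es!j > c" by force
    obtain x where x: "x \<in> carrier_vec n" "x \<noteq> 0\<^sub>v n" "x \<bullet> one = 0"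
      "x \<bullet> (L *\<^sub>v x) \<ge> min (es!i) (es!j) * (x \<bullet> x)"
      using two_index[OF U es LU _ _ ij(3) one] ij es by auto
    have xx: "x \<bullet> x > 0" using sq_pos_vec[OF x(1,2)] .
    have "min (es!i) (es!j) > c" using ij by simp
    hence "min (es!i) (es!j) * (x \<bullet> x) > c * (x \<bullet> x)" using xx by simp
    moreover have "x \<bullet> (L *\<^sub>v x) \<le> c * (x \<bullet> x)"
      using K[OF x(1)] x(3) xone[OF x(1)] qf_nonneg[of n Eb x] by simp
    ultimately show False using x(4) by simp
  qed
  show ?thesis
    unfolding Eb_def[symmetric] q2 c_def[symmetric]
  proof
    assume eq: "rev (sort es) ! 1 = c"
    from two_above[OF les, of "\<lambda>e. e \<ge> c"] eq obtain i j where
      ij: "i < length es" "j < length es" "i \<noteq> j" "es!i \<ge> c" "es!j \<ge> c" by force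
    obtain x where x: "x \<in> carrier_vec n" "x \<noteq> 0\<^sub>v n" "x \<bullet> one = 0"
      "x \<bullet> (L *\<^sub>v x) \<ge> min (es!i) (es!j) * (x \<bullet> x)"
      using two_index[OF U es LU _ _ ij(3) one] ij es by auto
    have xx: "x \<bullet> x > 0" using sq_pos_vec[OF x(1,2)] .
    have "min (es!i) (es!j) \<ge> c" using ij by simp
    hence "min (es!i) (es!j) * (x \<bullet> x) \<ge> c * (x \<bullet> x)" using xx by simp
    hence "x \<bullet> (L *\<^sub>v x) \<ge> c * (x \<bullet> x)" using x(4) by simp
    hence "qf n Eb x \<le> 0" using K[OF x(1)] x(3) xone[OF x(1)] by simp
    hence qf0: "qf n Eb x = 0" using qf_nonneg[of n Eb x] by simp
    have edge: "\<And>i j. Eb i j \<Longrightarrow> x $ i + x $ j = 0"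
    proof -
      fix i j assume e: "Eb i j"
      have ij: "i < n" "j < n" using bnd[OF e] by auto
      have nn: "\<forall>l\<in>{..<n}. 0 \<le> (\<Sum>j<n. if Eb l j then (x $ l + x $ j)^2 else (0::real))"
        by (auto intro!: sum_nonneg)
      have "(\<Sum>l<n. \<Sum>j<n. if Eb l j then (x $ l + x $ j)^2 else 0) = 0 \<longleftrightarrow>
          (\<forall>l\<in>{..<n}. (\<Sum>j<n. if Eb l j then (x $ l + x $ j)^2 else 0) = 0)"
        by (rule sum_nonneg_eq_0_iff[OF finite_lessThan]) (use nn in blast)
      hence "\<forall>l\<in>{..<n}. (\<Sum>j<n. if Eb l j then (x $ l + x $ j)^2 else 0) = 0"
        using qf0 unfolding qf_def by blast
      hence "(\<Sum>j<n. if Eb i j then (x $ i + x $ j)^2 else 0) = 0" using ij by blast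
      moreover have "(\<Sum>j<n. if Eb i j then (x $ i + x $ j)^2 else 0) = 0 \<longleftrightarrow>
          (\<forall>l\<in>{..<n}. (if Eb i l then (x $ i + x $ l)^2 else (0::real)) = 0)"
        by (rule sum_nonneg_eq_0_iff[OF finite_lessThan]) auto
      ultimately have "(if Eb i j then (x $ i + x $ j)^2 else 0) = 0" using ij by blast
      thus "x $ i + x $ j = 0" using e by simp
    qed
    obtain k where k: "k < n" "x $ k \<noteq> 0" using x(1,2) by (metis eq_vecI carrier_vecD index_zero_vec)
    show "(\<exists>C\<in>components n Eb. balanced_comp Eb C) \<or>
     (\<exists>C1\<in>components n Eb. \<exists>C2\<in>components n Eb. C1 \<noteq> C2 \<and> bipartite_comp Eb C1 \<and> bipartite_comp Eb C2)"
      using comb_forward[OF edge k] x(3) xone[OF x(1)] by simp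
  next
    assume H: "(\<exists>C\<in>components n Eb. balanced_comp Eb C) \<or>
     (\<exists>C1\<in>components n Eb. \<exists>C2\<in>components n Eb. C1 \<noteq> C2 \<and> bipartite_comp Eb C1 \<and> bipartite_comp Eb C2)"
    obtain x y where xy: "x \<in> carrier_vec n" "y \<in> carrier_vec n" "x \<noteq> 0\<^sub>v n" "y \<noteq> 0\<^sub>v n" "x \<bullet> y = 0"
      and bd: "\<And>a b. qf n Eb (a \<cdot>\<^sub>v x + b \<cdot>\<^sub>v y) \<le> 2 * (\<Sum>i<n. (a \<cdot>\<^sub>v x + b \<cdot>\<^sub>v y) $ i)^2"
      using comb_backward[OF H] by blast
    have "\<not> rev (sort es) ! 1 < c"
    proof
      assume "rev (sort es) ! 1 < c"
      from at_most_one_above[OF les this] obtain i0 where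
        i0: "i0 < length es" "\<And>k. k < length es \<Longrightarrow> k \<noteq> i0 \<Longrightarrow> es!k < c" by blast
      have i0n: "i0 < n" using i0(1) es by simp
      have small: "\<And>k. k < n \<Longrightarrow> k \<noteq> i0 \<Longrightarrow> es!k < c" using i0(2) es by simp
      obtain a b where ab: "(a \<cdot>\<^sub>v x + b \<cdot>\<^sub>v y) \<bullet> (L *\<^sub>v (a \<cdot>\<^sub>v x + b \<cdot>\<^sub>v y)) < c * ((a \<cdot>\<^sub>v x + b \<cdot>\<^sub>v y) \<bullet> (a \<cdot>\<^sub>v x + b \<cdot>\<^sub>v y))"
        using lower_index[OF U es LU i0n small xy] by blast
      have vc: "a \<cdot>\<^sub>v x + b \<cdot>\<^sub>v y \<in> carrier_vec n" using xy by auto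
      show False using K[OF vc] bd[of a b] ab by simp
    qed
    thus "rev (sort es) ! 1 = c" using upper by simp
  qed
qed

end
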